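(* If a sign string $S$ and a state string $J$ of length $n$ correspond to a dominant lattice path, then the growth algorithm applied to $(S,J)$ does not terminate until the sign and state strings have length $0$.
   Context: A sign string is $S=(s_1,\dots,s_n)\in\{+,-\}^n$ and a state string is $J=(j_1,\dots,j_n)\in\{-1,0,1\}^n$. Weights: let $\alpha_1,\alpha_2$ be the simple roots and $\mu^+,\mu^-$ the fundamental weights of $\mathfrak{sl}(3)$; put $\mathrm{wt}(e^+_1)=\mu^+$, $\mathrm{wt}(e^+_0)=\mu^+-\alpha_1$, $\mathrm{wt}(e^+_{-1})=\mu^+-\alpha_1-\alpha_2$, $\mathrm{wt}(e^-_1)=\mu^-$, $\mathrm{wt}(e^-_0)=\mu^--\alpha_2$, $\mathrm{wt}(e^-_{-1})=\mu^--\alpha_1-\alpha_2$. The pair $(S,J)$ determines the lattice path $\pi_0=0$, $\pi_k=\pi_{k-1}+\mathrm{wt}(e^{s_k}_{j_k})$; it is dominant if every $\pi_k$ is a nonnegative integral combination of $\mu^+,\mu^-$ and $\pi_n=0$. The growth algorithm builds an oriented planar graph downward from $n$ parallel strands, keeping a current pair (sign string, state string). A replacement acts on two adjacent positions $k,k+1$ with current signs $(s,s')$ and states $(j,j')$: (a) If $s'\ne s$: if $(j,j')=(1,0)$, $(0,0)$ or $(0,-1)$, attach an "H" (two trivalent vertices joined by a horizontal edge, each joined to its strand above and a new strand below); the new signs are $(s',s)$ and the new states respectively $(0,1)$, $(-1,1)$, $(-1,0)$. If $(j,j')=(1,-1)$, join the two strands by a cup and delete both positions. (b) If $s'=s$: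 if $(j,j')=(1,0)$, $(0,-1)$ or $(1,-1)$, attach a "Y" (the two strands meet at a trivalent vertex whose third edge continues downward); the two positions are replaced by one position with sign opposite to $s$ and state respectively $1$, $-1$, $0$. The algorithm repeatedly applies some applicable replacement and stops when none applies. *)

theory Defs
  imports Main "HOL-Library.Product_Plus"
begin

text \<open>Weights of sl(3) are written in the basis of fundamental weights:
  a weight is a pair (a,b) meaning a*mu_plus + b*mu_minus.
  The simple roots in this basis are given by the Cartan matrix.\<close>

definition mu_plus :: "int \<times> int" where "mu_plus = (1, 0)"
definition mu_minus :: "int \<times> int" where "mu_minus = (0, 1)"
definition alpha1 :: "int \<times> int" where "alpha1 = (2, -1)"
definition alpha2 :: "int \<times> int" where "alpha2 = (-1, 2)"

text \<open>Signs: True = +, False = -. States are integers in {-1,0,1}.\<close>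

definition wt :: "bool \<Rightarrow> int \<Rightarrow> int \<times> int" where
  "wt s j =
    (if s then
       (if j = 1 then mu_plus
        else if j = 0 then mu_plus - alpha1
        else mu_plus - alpha1 - alpha2)
     else
       (if j = 1 then mu_minus
        else if j = 0 then mu_minus - alpha2
        else mu_minus - alpha1 - alpha2))"

definition lpath :: "bool list \<Rightarrow> int list \<Rightarrow> nat \<Rightarrow> int \<times> int" where
  "lpath S J k = sum_list (map2 wt (take k S) (take k J))"

definition dominant :: "bool list \<Rightarrow> int list \<Rightarrow> bool" where
  "dominant S J \<longleftrightarrow>
     length S = length J \<and> set J \<subseteq> {-1, 0, 1} \<and>
     (\<forall>k \<le> length S. fst (lpath S J k) \<ge> 0 \<and> snd (lpath S J k) \<ge> 0) \<and>
     lpath S J (length S) = 0"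

inductive grow_step :: "bool list \<times> int list \<Rightarrow> bool list \<times> int list \<Rightarrow> bool" where
  H: "\<lbrakk> length S1 = length J1; s' \<noteq> s;
        (j, j', k, k') \<in> {(1, 0, 0, 1), (0, 0, -1, 1), (0, -1, -1, 0)} \<rbrakk>
      \<Longrightarrow> grow_step (S1 @ s # s' # S2, J1 @ j # j' # J2) (S1 @ s' # s # S2, J1 @ k # k' # J2)"
| cup: "\<lbrakk> length S1 = length J1; s' \<noteq> s \<rbrakk>
      \<Longrightarrow> grow_step (S1 @ s # s' # S2, J1 @ 1 # (-1) # J2) (S1 @ S2, J1 @ J2)"
| Y: "\<lbrakk> length S1 = length J1;
        (j, j', k) \<in> {(1, 0, 1), (0, -1, -1), (1, -1, 0)} \<rbrakk>
      \<Longrightarrow> grow_step (S1 @ s # s # S2, J1 @ j # j' # J2) (S1 @ (\<not> s) # S2, J1 @ k # J2)"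

end

theory Submission
  imports Defs
begin

fun ok :: "int \<times> int \<Rightarrow> (bool \<times> int) list \<Rightarrow> bool" where
  "ok p [] = (p = 0)"
| "ok p ((s,j)#xs) = (fst (p + wt s j) \<ge> 0 \<and> snd (p + wt s j) \<ge> 0 \<and> ok (p + wt s j) xs)"

lemma ok_iff:
  "ok p xs \<longleftrightarrow>
     (\<forall>k\<le>length xs. fst (p + sum_list (map (case_prod wt) (take k xs))) \<ge> 0 \<and>
                   snd (p + sum_list (map (case_prod wt) (take k xs))) \<ge> 0) \<and>
     p + sum_list (map (case_prod wt) xs) = 0"
  if "fst p \<ge> 0" "snd p \<ge> 0"
  using that
proof (induction xs arbitrary: p)
  case Nil
  then show ?case by auto
next
  case (Cons x xs)
  obtain s j where x: "x = (s,j)" by fastforce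
  show ?case
  proof
    assume h: "ok p (x # xs)"
    let ?q = "p + wt s j"
    from h x have q: "fst ?q \<ge> 0" "snd ?q \<ge> 0" "ok ?q xs" by auto
    with Cons.IH[OF q(1,2)] have I: "(\<forall>k\<le>length xs. fst (?q + sum_list (map (case_prod wt) (take k xs))) \<ge> 0 \<and>
                   snd (?q + sum_list (map (case_prod wt) (take k xs))) \<ge> 0) \<and>
     ?q + sum_list (map (case_prod wt) xs) = 0" by blast
    show "(\<forall>k\<le>length (x#xs). fst (p + sum_list (map (case_prod wt) (take k (x#xs)))) \<ge> 0 \<and>
                   snd (p + sum_list (map (case_prod wt) (take k (x#xs)))) \<ge> 0) \<and>
     p + sum_list (map (case_prod wt) (x#xs)) = 0"
    proof (intro conjI allI impI)
      fix k assume k: "k \<le> length (x#xs)"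
      show "fst (p + sum_list (map (case_prod wt) (take k (x#xs)))) \<ge> 0"
      proof (cases k)
        case 0 then show ?thesis using Cons.prems by simp
      next
        case (Suc m) then show ?thesis using I k x by (simp add: add.assoc)
      qed
      show "snd (p + sum_list (map (case_prod wt) (take k (x#xs)))) \<ge> 0"
      proof (cases k)
        case 0 then show ?thesis using Cons.prems by simp
      next
        case (Suc m) then show ?thesis using I k x by (simp add: add.assoc)
      qed
    next
      show "p + sum_list (map (case_prod wt) (x#xs)) = 0" using I x by (simp add: add.assoc)
    qed
  next
    assume h: "(\<forall>k\<le>length (x#xs). fst (p + sum_list (map (case_prod wt) (take k (x#xs)))) \<ge> 0 \<and>
                   snd (p + sum_list (map (case_prod wt) (take k (x#xs)))) \<ge> 0) \<and>
     p + sum_list (map (case_prod wt) (x#xs)) = 0"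
    let ?q = "p + wt s j"
    from h[THEN conjunct1, rule_format, of 1] x have q: "fst ?q \<ge> 0" "snd ?q \<ge> 0" by auto
    have "(\<forall>k\<le>length xs. fst (?q + sum_list (map (case_prod wt) (take k xs))) \<ge> 0 \<and>
                   snd (?q + sum_list (map (case_prod wt) (take k xs))) \<ge> 0) \<and>
     ?q + sum_list (map (case_prod wt) xs) = 0"
    proof (intro conjI allI impI)
      fix k assume k: "k \<le> length xs"
      from h[THEN conjunct1, rule_format, of "Suc k"] k x
      show "fst (?q + sum_list (map (case_prod wt) (take k xs))) \<ge> 0"
           "snd (?q + sum_list (map (case_prod wt) (take k xs))) \<ge> 0"
        by (auto simp: add.assoc)
    next
      show "?q + sum_list (map (case_prod wt) xs) = 0" using h x by (simp add: add.assoc)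
    qed
    with Cons.IH[OF q] have "ok ?q xs" by blast
    with q x show "ok p (x#xs)" by simp
  qed
qed

lemma dominant_iff:
  "dominant S J \<longleftrightarrow> length S = length J \<and> set J \<subseteq> {-1,0,1} \<and> ok 0 (zip S J)"
proof -
  have lp: "lpath S J k = sum_list (map (case_prod wt) (take k (zip S J)))" for k
    by (simp add: lpath_def take_zip)
  show ?thesis
  proof (cases "length S = length J")
    case True
    then show ?thesis
      unfolding dominant_def lp using ok_iff[of 0 "zip S J"] by auto
  next
    case False then show ?thesis unfolding dominant_def by auto
  qed
qed

lemma ok_replace:
  assumes "ok p (xs @ u @ ys)" "fst p \<ge> 0" "snd p \<ge> 0"
    and "\<And>q. fst q \<ge> 0 \<Longrightarrow> snd q \<ge> 0 \<Longrightarrow> ok q (u @ ys) \<Longrightarrow> ok q (v @ ys)"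
  shows "ok p (xs @ v @ ys)"
  using assms(1-3)
proof (induction xs arbitrary: p)
  case Nil then show ?case using assms(4) by simp
next
  case (Cons x xs)
  obtain s j where x: "x = (s,j)" by fastforce
  from Cons.prems x show ?case using Cons.IH[of "p + wt s j"] by auto
qed

lemma local_H:
  assumes "fst q \<ge> 0" "snd q \<ge> 0" "s' \<noteq> s"
    "(j, j', k, k') \<in> {(1, 0, 0, 1), (0, 0, -1, 1), (0, -1, -1, 0)}"
    "ok q ([(s,j),(s',j')] @ ys)"
  shows "ok q ([(s',k),(s,k')] @ ys)"
  using assms by (cases s; cases s'; auto simp: wt_def mu_plus_def mu_minus_def alpha1_def alpha2_def add.assoc)

lemma local_cup:
  assumes "s' \<noteq> s" "ok q ([(s,1),(s',-1)] @ ys)"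
  shows "ok q ([] @ ys)"
  using assms by (cases s; cases s'; auto simp: wt_def mu_plus_def mu_minus_def alpha1_def alpha2_def add.assoc zero_prod_def[symmetric])

lemma local_Y:
  assumes "(j, j', k) \<in> {(1, 0, 1), (0, -1, -1), (1, -1, 0)}"
    "ok q ([(s,j),(s,j')] @ ys)"
  shows "ok q ([(\<not>s,k)] @ ys)"
  using assms by (cases s; auto simp: wt_def mu_plus_def mu_minus_def alpha1_def alpha2_def add.assoc)

definition Inv where
  "Inv c \<longleftrightarrow> length (fst c) = length (snd c) \<and> set (snd c) \<subseteq> {-1,0,1} \<and> ok 0 (zip (fst c) (snd c))"

lemma step_Inv:
  assumes "grow_step c d" "Inv c" shows "Inv d"
  using assms
proof (induction rule: grow_step.induct)
  case (H S1 J1 s' s j j' k k' S2 J2)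
  then show ?case
    unfolding Inv_def
    using ok_replace[of 0 "zip S1 J1" "[(s,j),(s',j')]" "zip S2 J2" "[(s',k),(s,k')]"]
      local_H[of _ s' s j j' k k' "zip S2 J2"]
    by auto
next
  case (cup S1 J1 s' s S2 J2)
  then show ?case
    unfolding Inv_def
    using ok_replace[of 0 "zip S1 J1" "[(s,1),(s',-1)]" "zip S2 J2" "[]"]
      local_cup[of s' s _ "zip S2 J2"]
    by auto
next
  case (Y S1 J1 j j' k s S2 J2)
  then show ?case
    unfolding Inv_def
    using ok_replace[of 0 "zip S1 J1" "[(s,j),(s,j')]" "zip S2 J2" "[(\<not>s,k)]"]
      local_Y[of j j' k _ s "zip S2 J2"]
    by auto
qed

lemma local_step:
  assumes "j \<in> {-1,0,1}" "j' \<in> {-1,0,1}" "j > j'" "length S1 = length J1"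
  shows "\<exists>c. grow_step (S1@s#s'#S2, J1@j#j'#J2) c"
proof (cases "s = s'")
  case True
  have "j = 1 \<and> j' = 0 \<or> j = 0 \<and> j' = -1 \<or> j = 1 \<and> j' = -1" using assms by auto
  then show ?thesis using True grow_step.Y[OF assms(4), of j j' _ s S2 J2] by blast
next
  case False
  have "j = 1 \<and> j' = 0 \<or> j = 0 \<and> j' = -1 \<or> j = 1 \<and> j' = -1" using assms by auto
  then show ?thesis
  proof (elim disjE conjE)
    assume "j = 1" "j' = -1"
    then show ?thesis using False grow_step.cup[OF assms(4), of s' s S2 J2] by metis
  qed (use False grow_step.H[OF assms(4), of s' s j j' _ _ S2 J2] in auto)
qed

lemma split2: "Suc i < length xs \<Longrightarrow> xs = take i xs @ xs!i # xs!Suc i # drop (Suc (Suc i)) xs"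
  by (metis Cons_nth_drop_Suc Suc_lessD append_take_drop_id)

lemma nostep_sorted:
  assumes "\<not> (\<exists>c. grow_step (S, J) c)" "length S = length J" "set J \<subseteq> {-1,0,1}"
  shows "sorted J"
  unfolding sorted_iff_nth_Suc
proof (intro allI impI, rule ccontr)
  fix i assume i: "Suc i < length J" and n: "\<not> J ! i \<le> J ! Suc i"
  have "J!i \<in> set J" "J ! Suc i \<in> set J" using i by auto
  then have a: "J!i \<in> {-1,0,1}" "J!Suc i \<in> {-1,0,1}" using assms(3) by auto
  have "\<exists>c. grow_step (take i S @ S!i # S!Suc i # drop (Suc (Suc i)) S,
                 take i J @ J!i # J!Suc i # drop (Suc (Suc i)) J) c"
    by (rule local_step[OF a]) (use n i assms(2) in auto)
  then show False using assms(1,2) split2[of i S] split2[of i J] i by auto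
qed

lemma all_one: "ok p xs \<Longrightarrow> \<forall>x\<in>set xs. snd x = 1 \<Longrightarrow> fst p + snd p + int (length xs) = 0"
proof (induction xs arbitrary: p)
  case Nil then show ?case by simp
next
  case (Cons x xs)
  obtain s j where x: "x = (s,j)" by fastforce
  show ?case
  proof -
    let ?q = "p + wt s j"
    have h: "ok ?q xs" "j = 1" using Cons.prems x by auto
    have "fst ?q + snd ?q + int (length xs) = 0" using Cons.IH[OF h(1)] Cons.prems(2) by simp
    moreover have "fst ?q + snd ?q = fst p + snd p + 1" using h(2)
      by (cases s) (auto simp: wt_def mu_plus_def mu_minus_def)
    ultimately show ?thesis by simp
  qed
qed

theorem lemma4:
  fixes S S' :: "bool list" and J J' :: "int list"
  assumes "dominant S J"
    and "grow_step\<^sup>*\<^sup>* (S, J) (S', J')"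
    and "\<not> (\<exists>c. grow_step (S', J') c)"
  shows "S' = [] \<and> J' = []"
proof -
  have "Inv (S, J)" using assms(1) by (simp add: Inv_def dominant_iff)
  have "Inv (S', J')"
    using assms(2) \<open>Inv (S, J)\<close>
    by (induction rule: rtranclp_induct) (auto intro: step_Inv)
  then have L: "length S' = length J'" and st: "set J' \<subseteq> {-1,0,1}" and o: "ok 0 (zip S' J')"
    by (auto simp: Inv_def)
  have so: "sorted J'" using nostep_sorted[OF assms(3) L st] .
  show ?thesis
  proof (cases J')
    case Nil then show ?thesis using L by simp
  next
    case (Cons j Jr)
    then obtain s Sr where S': "S' = s # Sr" using L by (cases S') auto
    from o have "fst (wt s j) \<ge> 0" "snd (wt s j) \<ge> 0" using Cons S' by auto
    moreover have "j \<in> {-1,0,1}" using st Cons by auto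
    ultimately have j1: "j = 1"
      by (cases s; auto simp: wt_def mu_plus_def mu_minus_def alpha1_def alpha2_def)
    have "\<forall>x\<in>set J'. x = 1"
    proof
      fix x assume "x \<in> set J'"
      then have "x \<in> {-1,0,1}" "x = j \<or> x \<in> set Jr" using st Cons by auto
      moreover have "\<forall>y\<in>set Jr. j \<le> y" using so Cons by simp
      ultimately show "x = 1" using j1 by auto
    qed
    then have "\<forall>x\<in>set (zip S' J'). snd x = 1" by (auto dest: set_zip_rightD)
    from all_one[OF o this] have "length (zip S' J') = 0" by simp
    then show ?thesis using L Cons by simp
  qed
qed

end
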